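(* Let $X$ be a Banach lattice that has a quasi-interior point, and let $P\colon X\to X$ be a positive projection satisfying $\alpha\,\mathrm{id}_X\le P$ for some $\alpha>0$. If $B\subseteq X$ is a projection band with $P(B)\subseteq B$, then its disjoint complement $B^d$ also satisfies $P(B^d)\subseteq B^d$.
   Context: A quasi-interior point of $X$ is an element $e\in X_+$ whose generated ideal is norm dense in $X$. A positive projection is a linear $P$ with $P^2=P$ and $P(X_+)\subseteq X_+$. $\alpha\,\mathrm{id}_X\le P$ means $Px\ge\alpha x$ for all $x\in X_+$. $B^d=\{x\in X: |x|\wedge|b|=0 \text{ for all } b\in B\}$. *)

theory Defs
  imports "HOL-Analysis.Analysis"
begin

definition latabs :: "'a::{lattice,uminus} \<Rightarrow> 'a" where
  "latabs x = sup x (- x)"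

class banach_lattice = banach + lattice +
  assumes add_mono_bl: "x \<le> y \<Longrightarrow> x + z \<le> y + z"
    and scale_mono_bl: "x \<le> y \<Longrightarrow> 0 \<le> c \<Longrightarrow> c *\<^sub>R x \<le> c *\<^sub>R y"
    and norm_mono_bl: "sup x (- x) \<le> sup y (- y) \<Longrightarrow> norm x \<le> norm y"

definition positive_cone :: "'a::banach_lattice set" where
  "positive_cone = {x. 0 \<le> x}"

definition principal_ideal :: "'a::banach_lattice \<Rightarrow> 'a set" where
  "principal_ideal e = {x. \<exists>c::real. 0 \<le> c \<and> latabs x \<le> c *\<^sub>R e}"

definition quasi_interior_point :: "'a::banach_lattice \<Rightarrow> bool" where
  "quasi_interior_point e \<longleftrightarrow> 0 \<le> e \<and> closure (principal_ideal e) = UNIV"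

definition positive_projection :: "('a::banach_lattice \<Rightarrow> 'a) \<Rightarrow> bool" where
  "positive_projection P \<longleftrightarrow> linear P \<and> P \<circ> P = P \<and> (\<forall>x. 0 \<le> x \<longrightarrow> 0 \<le> P x)"

definition disj_compl :: "'a::banach_lattice set \<Rightarrow> 'a set" where
  "disj_compl B = {x. \<forall>b\<in>B. inf (latabs x) (latabs b) = 0}"

definition is_sup_of :: "'a::banach_lattice set \<Rightarrow> 'a \<Rightarrow> bool" where
  "is_sup_of D s \<longleftrightarrow> (\<forall>d\<in>D. d \<le> s) \<and> (\<forall>u. (\<forall>d\<in>D. d \<le> u) \<longrightarrow> s \<le> u)"

definition lattice_ideal :: "'a::banach_lattice set \<Rightarrow> bool" where
  "lattice_ideal B \<longleftrightarrow> subspace B \<and> (\<forall>x y. y \<in> B \<longrightarrow> latabs x \<le> latabs y \<longrightarrow> x \<in> B)"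

definition band :: "'a::banach_lattice set \<Rightarrow> bool" where
  "band B \<longleftrightarrow> lattice_ideal B \<and> (\<forall>D s. D \<subseteq> B \<longrightarrow> is_sup_of D s \<longrightarrow> s \<in> B)"

definition projection_band :: "'a::banach_lattice set \<Rightarrow> bool" where
  "projection_band B \<longleftrightarrow> band B \<and> (\<forall>x. \<exists>b\<in>B. \<exists>c\<in>disj_compl B. x = b + c)"

end

theory Submission imports Defs "HOL-Library.Lattice_Algebras" begin

context banach_lattice begin
subclass ordered_ab_group_add
  by standard (simp add: add_mono_bl add.commute)
end

lemma scale_rmono_bl: fixes x :: "'a::banach_lattice" assumes "a \<le> b" "0 \<le> x" shows "a *\<^sub>R x \<le> b *\<^sub>R x"
proof -
  have "(b - a) *\<^sub>R 0 \<le> (b - a) *\<^sub>R x" using assms by (intro scale_mono_bl) auto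
  hence "0 \<le> (b - a) *\<^sub>R x" by simp
  hence "0 \<le> b *\<^sub>R x - a *\<^sub>R x" by (simp only: scaleR_diff_left)
  thus "a *\<^sub>R x \<le> b *\<^sub>R x" by (simp only: diff_ge_0_iff_ge)
qed

context banach_lattice begin
subclass lattice_ab_group_add ..
end

lemma abs_nonneg: "0 \<le> latabs (x::'a::banach_lattice)"
proof -
  have "x + - x \<le> latabs x + latabs x" unfolding latabs_def by (intro add_mono) auto
  thus ?thesis by simp
qed

lemma latabs_eq0: "latabs (x::'a::banach_lattice) = 0 \<longleftrightarrow> x = 0"
  unfolding latabs_def by simp

lemma latabs_pos: "0 \<le> (x::'a::banach_lattice) \<Longrightarrow> latabs x = x"
  unfolding latabs_def by (metis minus_le_self_iff sup.absorb1)

lemma latabs_add: "latabs ((x::'a::banach_lattice) + y) \<le> latabs x + latabs y"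
proof -
  have "x + y \<le> latabs x + latabs y" unfolding latabs_def by (intro add_mono) auto
  moreover have "-(x + y) \<le> latabs x + latabs y" unfolding latabs_def minus_add_distrib
    by (intro add_mono) auto
  ultimately show ?thesis unfolding latabs_def by simp
qed

lemma inf_add_le:
  fixes u v c :: "'a::banach_lattice"
  assumes "0 \<le> u" "0 \<le> v" "0 \<le> c"
  shows "inf (u + v) c \<le> inf u c + inf v c"
proof -
  let ?w = "inf (u + v) c"
  have "?w \<le> u + inf v c" unfolding add_inf_distrib_left
    using assms by (auto intro: le_infI2 simp: add_increasing)
  moreover have "?w \<le> c + inf v c" unfolding add_inf_distrib_left
    using assms by (auto intro!: le_infI2 simp: add_increasing add_increasing2)
  ultimately have "?w \<le> inf (u + inf v c) (c + inf v c)" by simp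
  also have "\<dots> = inf u c + inf v c" by (simp add: add_inf_distrib_right)
  finally show ?thesis .
qed

lemma latabs_scale: "latabs (a *\<^sub>R (x::'a::banach_lattice)) \<le> \<bar>a\<bar> *\<^sub>R latabs x"
proof (cases "a \<ge> 0")
  case True
  have "a *\<^sub>R x \<le> a *\<^sub>R latabs x"
    by (rule scale_mono_bl) (auto simp: latabs_def True)
  moreover have "a *\<^sub>R (-x) \<le> a *\<^sub>R latabs x"
    by (rule scale_mono_bl) (auto simp: latabs_def True)
  moreover have "a *\<^sub>R (-x) = - (a *\<^sub>R x)" by (rule scaleR_minus_right)
  moreover have "\<bar>a\<bar> = a" using True by simp
  ultimately have "a *\<^sub>R x \<le> \<bar>a\<bar> *\<^sub>R latabs x" "- (a *\<^sub>R x) \<le> \<bar>a\<bar> *\<^sub>R latabs x"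
    by simp_all
  thus ?thesis unfolding latabs_def by (rule sup_least)
next
  case False
  have "\<bar>a\<bar> *\<^sub>R x \<le> \<bar>a\<bar> *\<^sub>R latabs x"
    by (rule scale_mono_bl) (auto simp: latabs_def)
  moreover have "\<bar>a\<bar> *\<^sub>R (-x) \<le> \<bar>a\<bar> *\<^sub>R latabs x"
    by (rule scale_mono_bl) (auto simp: latabs_def)
  moreover have "\<bar>a\<bar> = - a" using False by simp
  ultimately have "a *\<^sub>R x \<le> \<bar>a\<bar> *\<^sub>R latabs x" "- (a *\<^sub>R x) \<le> \<bar>a\<bar> *\<^sub>R latabs x"
    by simp_all
  thus ?thesis unfolding latabs_def by (rule sup_least)
qed

lemma inf_scale_le:
  fixes p q :: "'a::banach_lattice"
  assumes "k > 0"
  shows "inf (k *\<^sub>R p) (k *\<^sub>R q) \<le> k *\<^sub>R inf p q"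
proof -
  have "(1/k) *\<^sub>R inf (k *\<^sub>R p) (k *\<^sub>R q) \<le> (1/k) *\<^sub>R (k *\<^sub>R p)"
       "(1/k) *\<^sub>R inf (k *\<^sub>R p) (k *\<^sub>R q) \<le> (1/k) *\<^sub>R (k *\<^sub>R q)"
    using assms by (intro scale_mono_bl; simp)+
  moreover have "(1/k) *\<^sub>R (k *\<^sub>R p) = p" "(1/k) *\<^sub>R (k *\<^sub>R q) = q" using assms by simp_all
  ultimately have "(1/k) *\<^sub>R inf (k *\<^sub>R p) (k *\<^sub>R q) \<le> inf p q" using assms by simp
  hence "k *\<^sub>R ((1/k) *\<^sub>R inf (k *\<^sub>R p) (k *\<^sub>R q)) \<le> k *\<^sub>R inf p q"
    using assms by (intro scale_mono_bl) auto
  thus ?thesis using assms by simp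
qed

lemma disj_iff: "x \<in> disj_compl B \<longleftrightarrow> (\<forall>b\<in>B. inf (latabs x) (latabs b) \<le> 0)"
proof -
  have h: "\<And>b. 0 \<le> inf (latabs x) (latabs b)" by (simp add: abs_nonneg)
  show ?thesis unfolding disj_compl_def using h by (auto intro: order.antisym)
qed

lemma disj_solid:
  assumes x: "x \<in> disj_compl B" and y: "latabs y \<le> latabs x"
  shows "y \<in> disj_compl B"
  unfolding disj_iff
proof
  fix b assume b: "b \<in> B"
  have "inf (latabs x) (latabs b) \<le> 0" using x b unfolding disj_iff by blast
  moreover have "inf (latabs y) (latabs b) \<le> inf (latabs x) (latabs b)"
    using y by (rule inf_mono[OF _ order_refl])
  ultimately show "inf (latabs y) (latabs b) \<le> 0" by (rule order.trans[rotated])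
qed

lemma disj_add: "x \<in> disj_compl B \<Longrightarrow> y \<in> disj_compl B \<Longrightarrow> x + y \<in> disj_compl B"
  unfolding disj_iff
proof
  fix b assume x: "\<forall>b\<in>B. inf (latabs x) (latabs b) \<le> 0" and y: "\<forall>b\<in>B. inf (latabs y) (latabs b) \<le> 0"
    and b: "b \<in> B"
  have "inf (latabs (x + y)) (latabs b) \<le> inf (latabs x + latabs y) (latabs b)"
    by (intro inf_mono latabs_add order_refl)
  also have "\<dots> \<le> inf (latabs x) (latabs b) + inf (latabs y) (latabs b)"
    by (intro inf_add_le abs_nonneg)
  also have "\<dots> \<le> 0" using x y b by (simp add: add_nonpos_nonpos)
  finally show "inf (latabs (x + y)) (latabs b) \<le> 0" .
qed

lemma disj_scale: "x \<in> disj_compl B \<Longrightarrow> a *\<^sub>R x \<in> disj_compl B"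
  unfolding disj_iff
proof
  fix b assume x: "\<forall>b\<in>B. inf (latabs x) (latabs b) \<le> 0" and b: "b \<in> B"
  define k where "k = max 1 \<bar>a\<bar>"
  have k: "k > 0" "\<bar>a\<bar> \<le> k" "1 \<le> k" unfolding k_def by auto
  have "latabs (a *\<^sub>R x) \<le> k *\<^sub>R latabs x"
    using latabs_scale[of a x] scale_rmono_bl[OF k(2) abs_nonneg[of x]] by simp
  moreover have "latabs b \<le> k *\<^sub>R latabs b"
    using scale_rmono_bl[OF k(3) abs_nonneg[of b]] by simp
  ultimately have "inf (latabs (a *\<^sub>R x)) (latabs b) \<le> inf (k *\<^sub>R latabs x) (k *\<^sub>R latabs b)"
    by (rule inf_mono)
  also have "\<dots> \<le> k *\<^sub>R inf (latabs x) (latabs b)" by (rule inf_scale_le[OF k(1)])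
  also have "\<dots> \<le> k *\<^sub>R 0" using x b k by (intro scale_mono_bl) auto
  also have "\<dots> = 0" by simp
  finally show "inf (latabs (a *\<^sub>R x)) (latabs b) \<le> 0" .
qed

lemma disj_diff: "x \<in> disj_compl B \<Longrightarrow> y \<in> disj_compl B \<Longrightarrow> x - y \<in> disj_compl B"
  using disj_add[of x B "(-1) *\<^sub>R y"] disj_scale[of y B "-1"] by simp

lemma disj_inter: "b \<in> B \<Longrightarrow> b \<in> disj_compl B \<Longrightarrow> b = 0"
proof -
  assume "b \<in> B" "b \<in> disj_compl B"
  hence "inf (latabs b) (latabs b) = 0" unfolding disj_compl_def by blast
  thus "b = 0" by (simp add: latabs_eq0)
qed

lemma comp_pos:
  fixes b c :: "'a::banach_lattice"
  assumes "b \<in> B" "c \<in> disj_compl B" "0 \<le> b + c"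
  shows "0 \<le> b" "0 \<le> c"
proof -
  have d: "inf (latabs c) (latabs b) = 0" using assms unfolding disj_compl_def by auto
  have "-b \<le> c" using add_right_mono[OF assms(3), of "-b"] by (simp add: algebra_simps)
  have "-c \<le> b" using add_right_mono[OF assms(3), of "-c"] by (simp add: algebra_simps)
  have "sup (-b) 0 \<le> inf (latabs c) (latabs b)"
    using \<open>-b \<le> c\<close> abs_nonneg[of b] abs_nonneg[of c] unfolding latabs_def
    by (auto intro: le_supI1)
  hence "-b \<le> 0" using d by simp
  thus "0 \<le> b" by simp
  have "sup (-c) 0 \<le> inf (latabs c) (latabs b)"
    using \<open>-c \<le> b\<close> abs_nonneg[of b] abs_nonneg[of c] unfolding latabs_def
    by (auto intro: le_supI1)
  hence "-c \<le> 0" using d by simp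
  thus "0 \<le> c" by simp
qed

lemma pos_case:
  fixes P :: "'a::banach_lattice \<Rightarrow> 'a" and B :: "'a set" and \<alpha> :: real
  assumes lin: "linear P" and idem: "\<And>y. P (P y) = P y"
    and pos: "\<And>y. 0 \<le> y \<Longrightarrow> 0 \<le> P y"
    and al: "\<alpha> > 0"
    and ge: "\<And>y. 0 \<le> y \<Longrightarrow> \<alpha> *\<^sub>R y \<le> P y"
    and sub: "subspace B"
    and dec: "\<And>y. \<exists>b\<in>B. \<exists>c\<in>disj_compl B. y = b + c"
    and inv: "\<And>b. b \<in> B \<Longrightarrow> P b \<in> B"
    and x: "x \<in> disj_compl B" "0 \<le> x"
  shows "P x \<in> disj_compl B"
proof -
  let ?D = "disj_compl B"
  obtain b c where b: "b \<in> B" and c: "c \<in> ?D" and Px: "P x = b + c" using dec by blast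
  obtain b1 c1 where b1: "b1 \<in> B" and c1: "c1 \<in> ?D" and Pc: "P c = b1 + c1" using dec by blast
  have "b + c = P b + b1 + c1"
    using idem[of x] Px Pc by (simp add: linear_add[OF lin] add.assoc)
  hence eq: "P b + b1 - b = c - c1" by (simp add: algebra_simps)
  have "P b + b1 - b \<in> B" using sub b b1 inv[OF b]
    by (simp add: subspace_add subspace_diff)
  moreover have "c - c1 \<in> ?D" using c c1 by (rule disj_diff)
  ultimately have "P b + b1 - b = 0" using eq disj_inter[of "P b + b1 - b" B] by simp
  hence bb: "b = P b + b1" by (simp add: algebra_simps)
  have "P b = P b + P b1" using arg_cong[OF bb, of P] idem[of b]
    by (simp add: linear_add[OF lin])
  hence Pb1: "P b1 = 0" by simp
  have "0 \<le> P x - \<alpha> *\<^sub>R x" using ge[OF x(2)] by simp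
  moreover have "P x - \<alpha> *\<^sub>R x = b + (c - \<alpha> *\<^sub>R x)" using Px by simp
  moreover have "c - \<alpha> *\<^sub>R x \<in> ?D" using c x(1) by (intro disj_diff disj_scale)
  ultimately have cx: "0 \<le> c - \<alpha> *\<^sub>R x" using comp_pos(2)[OF b, of "c - \<alpha> *\<^sub>R x"] by simp
  have "0 \<le> \<alpha> *\<^sub>R x" using scale_mono_bl[OF x(2), of \<alpha>] al by simp
  hence "0 \<le> (c - \<alpha> *\<^sub>R x) + \<alpha> *\<^sub>R x" using cx by (intro add_nonneg_nonneg)
  hence "0 \<le> c" by simp
  hence "0 \<le> P c" by (rule pos)
  hence "0 \<le> b1" using comp_pos(1)[OF b1 c1] Pc by simp
  hence "\<alpha> *\<^sub>R b1 \<le> 0" using ge[of b1] Pb1 by simp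
  hence "(1/\<alpha>) *\<^sub>R (\<alpha> *\<^sub>R b1) \<le> (1/\<alpha>) *\<^sub>R 0" using al by (intro scale_mono_bl) auto
  hence "b1 \<le> 0" using al by simp
  hence b10: "b1 = 0" using \<open>0 \<le> b1\<close> by (rule antisym)
  have "0 \<le> P (c - \<alpha> *\<^sub>R x)" using cx by (rule pos)
  moreover have "P (c - \<alpha> *\<^sub>R x) = (- \<alpha> *\<^sub>R b) + (c1 - \<alpha> *\<^sub>R c)"
    using Pc Px b10 by (simp add: linear_diff[OF lin] linear_scale[OF lin] algebra_simps)
  moreover have "- \<alpha> *\<^sub>R b \<in> B" using subspace_scale[OF sub b, of "- \<alpha>"] by simp
  moreover have "c1 - \<alpha> *\<^sub>R c \<in> ?D" using c c1 by (intro disj_diff disj_scale)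
  ultimately have "0 \<le> - \<alpha> *\<^sub>R b" using comp_pos(1)[of "- \<alpha> *\<^sub>R b" B "c1 - \<alpha> *\<^sub>R c"] by simp
  hence "(1/\<alpha>) *\<^sub>R 0 \<le> (1/\<alpha>) *\<^sub>R (- \<alpha> *\<^sub>R b)" using al by (intro scale_mono_bl) auto
  hence "0 \<le> - b" using al by simp
  hence "b \<le> 0" by simp
  moreover have "0 \<le> b" using comp_pos(1)[OF b c] Px pos[OF x(2)] by simp
  ultimately have "b = 0" by (rule antisym)
  thus ?thesis using Px c by simp
qed

theorem lemma2p3:
  fixes P :: "'a::banach_lattice \<Rightarrow> 'a" and B :: "'a set" and \<alpha> :: real
  assumes "\<exists>e::'a. quasi_interior_point e"
    and "positive_projection P"
    and "\<alpha> > 0"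
    and "\<forall>x. 0 \<le> x \<longrightarrow> \<alpha> *\<^sub>R x \<le> P x"
    and "projection_band B"
    and "P ` B \<subseteq> B"
  shows "P ` disj_compl B \<subseteq> disj_compl B"
proof -
  have lin: "linear P" and PP: "P \<circ> P = P" and pos0: "\<forall>x. 0 \<le> x \<longrightarrow> 0 \<le> P x"
    using assms(2) unfolding positive_projection_def by blast+
  have idem: "\<And>y. P (P y) = P y" using PP by (metis comp_apply)
  have pos: "\<And>y. 0 \<le> y \<Longrightarrow> 0 \<le> P y" using pos0 by blast
  have "band B" using assms(5) unfolding projection_band_def by (rule conjunct1)
  hence "lattice_ideal B" unfolding band_def by (rule conjunct1)
  hence sub: "subspace B" unfolding lattice_ideal_def by (rule conjunct1)
  have d0: "\<forall>x. \<exists>b\<in>B. \<exists>c\<in>disj_compl B. x = b + c"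
    using assms(5) unfolding projection_band_def by (rule conjunct2)
  have dec: "\<And>y. \<exists>b\<in>B. \<exists>c\<in>disj_compl B. y = b + c" using d0 by blast
  have inv: "\<And>b. b \<in> B \<Longrightarrow> P b \<in> B" using assms(6) by blast
  have ge: "\<And>y. 0 \<le> y \<Longrightarrow> \<alpha> *\<^sub>R y \<le> P y" using assms(4) by blast
  show ?thesis
  proof
    fix y assume "y \<in> P ` disj_compl B"
    then obtain x where x: "x \<in> disj_compl B" and y: "y = P x" by blast
    define xp where "xp = sup x 0"
    define xn where "xn = sup (-x) 0"
    have e1: "x = sup x 0 + inf x 0" using add_eq_inf_sup[of x 0] by (simp only: add_0_right)
    have e2: "inf x 0 = - sup (-x) 0" using inf_eq_neg_sup[of x 0] by (simp only: minus_zero)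
    have xeq: "x = xp - xn" unfolding xp_def xn_def using e1 e2 by (metis diff_conv_add_uminus)
    have xp0: "0 \<le> xp" "0 \<le> xn" unfolding xp_def xn_def by simp_all
    have "xp \<le> latabs x" unfolding xp_def latabs_def
      by (rule sup_least) (simp_all add: abs_nonneg[of x, unfolded latabs_def])
    hence "latabs xp \<le> latabs x" using latabs_pos[OF xp0(1)] by simp
    hence xpD: "xp \<in> disj_compl B" using x disj_solid by blast
    have "xn \<le> latabs x" unfolding xn_def latabs_def
      by (rule sup_least) (simp_all add: abs_nonneg[of x, unfolded latabs_def])
    hence "latabs xn \<le> latabs x" using latabs_pos[OF xp0(2)] by simp
    hence xnD: "xn \<in> disj_compl B" using x disj_solid by blast
    have "P xp \<in> disj_compl B"
      using lin idem pos assms(3) ge sub dec inv xpD xp0(1) by (rule pos_case)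
    moreover have "P xn \<in> disj_compl B"
      using lin idem pos assms(3) ge sub dec inv xnD xp0(2) by (rule pos_case)
    ultimately
    have "P xp - P xn \<in> disj_compl B" by (rule disj_diff)
    thus "y \<in> disj_compl B" using y xeq by (simp add: linear_diff[OF lin])
  qed
qed

end
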